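(* Let $(\star)$ be a linear system over $\mathbb{F}_q$ in $k$ variables, and suppose that $(\star)$ is equivalent to a linear system $(\star')$ whose coefficient matrix (after reordering the variables) has the block form $A'=\begin{pmatrix}A_1&0\\0&A_2\end{pmatrix}$ with $A_1\in\mathbb{F}_q^{m_1\times k_1}$, $A_2\in\mathbb{F}_q^{m_2\times k_2}$ and $m_1,m_2,k_1,k_2\ne0$. Then $(\star)$ is temperate if and only if the systems with coefficient matrices $A_1$ and $A_2$ are both temperate.
   Context: A linear system with coefficient matrix $A\in\mathbb{F}_q^{m\times k}$ has solutions $(x_1,\dots,x_k)\in(\mathbb{F}_q^n)^k$ with $\sum_j a_{ij}x_j=0$ for all $i$. Two systems are equivalent if each equation of one is a linear combination of the equations of the other. A solution is generic if every $b\in\mathbb{F}_q^k$ with $b_1+\dots+b_k=0$ and $\sum_jb_jx_j=0$ lies in the row space of the coefficient matrix. A system is temperate if there exist constants $\beta,\gamma>0$ with $\gamma<q$ such that for every $n$ every $S\subseteq\mathbb{F}_q^n$ with $|S|\ge\beta\gamma^n$ contains a generic solution in $S^k$. *)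

theory Defs
  imports Complex_Main
begin

text \<open>The field F_q is a type 'a of class finite and field; q = CARD('a).
A vector of F_q^n is a function nat => 'a vanishing outside {..<n}.
A coefficient matrix in F_q^(m x k) is a function nat => nat => 'a, of which only the
entries with row index < m and column index < k are relevant.
A k-tuple (x_1,...,x_k) of vectors is a function nat => (nat => 'a), index j < k.\<close>

definition vecs :: "nat \<Rightarrow> (nat \<Rightarrow> 'a::zero) set" where
  "vecs n = {x. \<forall>t\<ge>n. x t = 0}"

definition is_solution ::
  "nat \<Rightarrow> nat \<Rightarrow> (nat \<Rightarrow> nat \<Rightarrow> 'a::field) \<Rightarrow> nat \<Rightarrow> (nat \<Rightarrow> nat \<Rightarrow> 'a) \<Rightarrow> bool" where
  "is_solution m k A n x \<longleftrightarrow>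
     (\<forall>j<k. x j \<in> vecs n) \<and>
     (\<forall>i<m. \<forall>t<n. (\<Sum>j<k. A i j * x j t) = 0)"

definition in_row_space ::
  "nat \<Rightarrow> nat \<Rightarrow> (nat \<Rightarrow> nat \<Rightarrow> 'a::field) \<Rightarrow> (nat \<Rightarrow> 'a) \<Rightarrow> bool" where
  "in_row_space m k A b \<longleftrightarrow> (\<exists>c. \<forall>j<k. b j = (\<Sum>i<m. c i * A i j))"

definition is_generic_solution ::
  "nat \<Rightarrow> nat \<Rightarrow> (nat \<Rightarrow> nat \<Rightarrow> 'a::field) \<Rightarrow> nat \<Rightarrow> (nat \<Rightarrow> nat \<Rightarrow> 'a) \<Rightarrow> bool" where
  "is_generic_solution m k A n x \<longleftrightarrow>
     is_solution m k A n x \<and>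
     (\<forall>b. (\<Sum>j<k. b j) = 0 \<and> (\<forall>t<n. (\<Sum>j<k. b j * x j t) = 0)
          \<longrightarrow> in_row_space m k A b)"

definition temperate ::
  "nat \<Rightarrow> nat \<Rightarrow> (nat \<Rightarrow> nat \<Rightarrow> 'a::{finite,field}) \<Rightarrow> bool" where
  "temperate m k A \<longleftrightarrow>
     (\<exists>\<beta> \<gamma>::real. \<beta> > 0 \<and> \<gamma> > 0 \<and> \<gamma> < real (card (UNIV :: 'a set)) \<and>
        (\<forall>n. \<forall>S. S \<subseteq> vecs n \<and> real (card S) \<ge> \<beta> * \<gamma> ^ n \<longrightarrow>
            (\<exists>x. (\<forall>j<k. x j \<in> S) \<and> is_generic_solution m k A n x)))"

definition equivalent_systems ::
  "nat \<Rightarrow> (nat \<Rightarrow> nat \<Rightarrow> 'a::field) \<Rightarrow> nat \<Rightarrow> (nat \<Rightarrow> nat \<Rightarrow> 'a) \<Rightarrow> nat \<Rightarrow> bool" where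
  "equivalent_systems m A m' B k \<longleftrightarrow>
     (\<forall>i<m. in_row_space m' k B (A i)) \<and> (\<forall>i<m'. in_row_space m k A (B i))"

definition block_diag ::
  "nat \<Rightarrow> nat \<Rightarrow> (nat \<Rightarrow> nat \<Rightarrow> 'a::zero) \<Rightarrow> (nat \<Rightarrow> nat \<Rightarrow> 'a) \<Rightarrow> nat \<Rightarrow> nat \<Rightarrow> 'a" where
  "block_diag m1 k1 A1 A2 i j =
     (if i < m1 then (if j < k1 then A1 i j else 0)
      else (if j < k1 then 0 else A2 (i - m1) (j - k1)))"

end

theory Submission
  imports Defs "HOL-Library.FuncSet"
begin

definition dep :: "nat \<Rightarrow> (nat \<Rightarrow> 'a::field) \<Rightarrow> (nat \<Rightarrow> nat \<Rightarrow> 'a) \<Rightarrow> nat \<Rightarrow> bool" where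
  "dep k b x n \<longleftrightarrow> (\<forall>t<n. (\<Sum>j<k. b j * x j t) = 0)"

definition gen :: "((nat \<Rightarrow> 'a::field) \<Rightarrow> bool) \<Rightarrow> nat \<Rightarrow> nat \<Rightarrow> (nat \<Rightarrow> nat \<Rightarrow> 'a) \<Rightarrow> bool" where
  "gen R k n x \<longleftrightarrow> (\<forall>j<k. x j \<in> vecs n) \<and> (\<forall>b. R b \<longrightarrow> dep k b x n)
     \<and> (\<forall>b. (\<Sum>j<k. b j) = 0 \<and> dep k b x n \<longrightarrow> R b)"

definition Temp :: "((nat \<Rightarrow> 'a::{finite,field}) \<Rightarrow> bool) \<Rightarrow> nat \<Rightarrow> bool" where
  "Temp R k \<longleftrightarrow> (\<exists>\<beta> \<gamma>::real. \<beta> > 0 \<and> \<gamma> > 0 \<and> \<gamma> < real (card (UNIV :: 'a set)) \<and>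
        (\<forall>n. \<forall>S. S \<subseteq> vecs n \<and> real (card S) \<ge> \<beta> * \<gamma> ^ n \<longrightarrow>
            (\<exists>x. (\<forall>j<k. x j \<in> S) \<and> gen R k n x)))"

lemma sol_char:
  "is_solution m k A n x \<longleftrightarrow> (\<forall>j<k. x j \<in> vecs n) \<and> (\<forall>b. in_row_space m k A b \<longrightarrow> dep k b x n)"
proof
  assume h: "is_solution m k A n x"
  show "(\<forall>j<k. x j \<in> vecs n) \<and> (\<forall>b. in_row_space m k A b \<longrightarrow> dep k b x n)"
  proof (rule conjI)
    show "\<forall>j<k. x j \<in> vecs n" using h by (simp add: is_solution_def)
  next
    show "\<forall>b. in_row_space m k A b \<longrightarrow> dep k b x n"
    proof (intro allI impI)
    fix b assume "in_row_space m k A b"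
    then obtain c where c: "\<forall>j<k. b j = (\<Sum>i<m. c i * A i j)" by (auto simp: in_row_space_def)
    show "dep k b x n" unfolding dep_def
    proof (intro allI impI)
      fix t assume t: "t < n"
      have "(\<Sum>j<k. b j * x j t) = (\<Sum>j<k. (\<Sum>i<m. c i * A i j) * x j t)"
        by (rule sum.cong) (simp_all add: c)
      also have "\<dots> = (\<Sum>i<m. c i * (\<Sum>j<k. A i j * x j t))"
        by (simp add: sum_distrib_left sum_distrib_right sum.swap[of _ "{..<k}"] mult.assoc)
      also have "\<dots> = 0" using h t by (simp add: is_solution_def)
      finally show "(\<Sum>j<k. b j * x j t) = 0" .
    qed
    qed
  qed
next
  assume h: "(\<forall>j<k. x j \<in> vecs n) \<and> (\<forall>b. in_row_space m k A b \<longrightarrow> dep k b x n)"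
  show "is_solution m k A n x" unfolding is_solution_def
  proof (intro conjI allI impI)
    show "\<And>j. j < k \<Longrightarrow> x j \<in> vecs n" using h by auto
    fix i t assume i: "i < m" and t: "t < n"
    have "in_row_space m k A (A i)" unfolding in_row_space_def
      by (rule exI[of _ "\<lambda>l. if l = i then 1 else 0"]) (simp add: i if_distrib[where f="\<lambda>z. z * _"] cong: if_cong)
    with h t show "(\<Sum>j<k. A i j * x j t) = 0" by (auto simp: dep_def)
  qed
qed

lemma gen_char: "is_generic_solution m k A n x \<longleftrightarrow> gen (in_row_space m k A) k n x"
  unfolding is_generic_solution_def gen_def sol_char dep_def by blast

lemma temperate_Temp: "temperate m k A \<longleftrightarrow> Temp (in_row_space m k A) k"
  unfolding temperate_def Temp_def gen_char ..

lemma rowsp_trans: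
  assumes "\<forall>i<m. in_row_space m' k B (A i)" "in_row_space m k A b"
  shows "in_row_space m' k B b"
proof -
  obtain c where c: "\<forall>j<k. b j = (\<Sum>i<m. c i * A i j)" using assms(2) by (auto simp: in_row_space_def)
  have "\<forall>i. \<exists>d. i < m \<longrightarrow> (\<forall>j<k. A i j = (\<Sum>l<m'. d l * B l j))"
    using assms(1) by (auto simp: in_row_space_def)
  then obtain d where d: "\<And>i j. i < m \<Longrightarrow> j < k \<Longrightarrow> A i j = (\<Sum>l<m'. d i l * B l j)"
    by metis
  show ?thesis unfolding in_row_space_def
  proof (rule exI[of _ "\<lambda>l. \<Sum>i<m. c i * d i l"], intro allI impI)
    fix j assume j: "j < k"
    have "b j = (\<Sum>i<m. c i * (\<Sum>l<m'. d i l * B l j))" using c d j by (auto intro: sum.cong)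
    also have "\<dots> = (\<Sum>l<m'. (\<Sum>i<m. c i * d i l) * B l j)"
      by (simp add: sum_distrib_left sum_distrib_right sum.swap[of _ "{..<m}"] mult.assoc)
    finally show "b j = (\<Sum>l<m'. (\<Sum>i<m. c i * d i l) * B l j)" .
  qed
qed

lemma sum_split: "(\<Sum>j<k1+k2. f j) = (\<Sum>j<k1. f j) + (\<Sum>j<k2. f (k1+j))" for k1 k2 :: nat
  by (induction k2) (auto simp: add_ac)

lemma avg_exists:
  fixes g :: "'b \<Rightarrow> real"
  assumes "finite Y" "Y \<noteq> {}" "X \<le> (\<Sum>y\<in>Y. g y)"
  shows "\<exists>y\<in>Y. X \<le> real (card Y) * g y"
proof (rule ccontr)
  assume "\<not> ?thesis"
  hence "\<forall>y\<in>Y. real (card Y) * g y < X" by auto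
  hence "(\<Sum>y\<in>Y. real (card Y) * g y) < (\<Sum>y\<in>Y. X)"
    using assms by (intro sum_strict_mono) auto
  hence "real (card Y) * (\<Sum>y\<in>Y. g y) < real (card Y) * X"
    by (simp add: sum_distrib_left)
  moreover have "real (card Y) > 0" using assms by (simp add: card_gt_0_iff)
  ultimately show False using assms(3) by (simp add: mult_le_cancel_left_pos)
qed

lemma pigeon:
  assumes "finite S" "finite Y" "f ` S \<subseteq> Y" "S \<noteq> {}"
  shows "\<exists>y\<in>Y. real (card S) \<le> real (card Y) * real (card {s\<in>S. f s = y})"
proof -
  have "S \<subseteq> (\<Union>y\<in>Y. {s\<in>S. f s = y})" using assms by auto
  hence "card S \<le> card (\<Union>y\<in>Y. {s\<in>S. f s = y})"
    by (intro card_mono) (use assms in auto)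
  also have "\<dots> \<le> (\<Sum>y\<in>Y. card {s\<in>S. f s = y})" by (rule card_UN_le) (use assms in auto)
  finally have "real (card S) \<le> (\<Sum>y\<in>Y. real (card {s\<in>S. f s = y}))" by (simp flip: of_nat_sum)
  moreover have "Y \<noteq> {}" using assms by auto
  ultimately show ?thesis using avg_exists[OF assms(2)] by blast
qed

lemma card_ge2: "card (UNIV :: 'a::{finite,field} set) \<ge> 2"
proof -
  have "card {0::'a, 1} = 2" by simp
  moreover have "card {0::'a, 1} \<le> card (UNIV :: 'a set)" by (rule card_mono) auto
  ultimately show ?thesis by simp
qed


lemma proj_inj:
  fixes z :: "nat \<Rightarrow> nat \<Rightarrow> 'a::field"
  shows "\<exists>T. finite T \<and> card T \<le> k \<and>
    (\<forall>b. (\<forall>t\<in>T. (\<Sum>j<k. b j * z j t) = 0) \<longrightarrow> (\<forall>t. (\<Sum>j<k. b j * z j t) = 0))"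
proof (induction k)
  case 0
  show ?case by (rule exI[of _ "{}"]) simp
next
  case (Suc k)
  then obtain T where T: "finite T" "card T \<le> k"
    and IH: "\<And>b. (\<forall>t\<in>T. (\<Sum>j<k. b j * z j t) = 0) \<Longrightarrow> (\<forall>t. (\<Sum>j<k. b j * z j t) = 0)"
    by blast
  show ?case
  proof (cases "\<forall>b. (\<forall>t\<in>T. (\<Sum>j<Suc k. b j * z j t) = 0) \<longrightarrow> (\<forall>t. (\<Sum>j<Suc k. b j * z j t) = 0)")
    case True
    then show ?thesis using T by (intro exI[of _ T]) auto
  next
    case False
    then obtain b0 t0 where b0T: "\<forall>t\<in>T. (\<Sum>j<Suc k. b0 j * z j t) = 0"
      and t0: "(\<Sum>j<Suc k. b0 j * z j t0) \<noteq> 0" by blast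
    define lam where "lam = b0 k"
    have lam: "lam \<noteq> 0"
    proof
      assume "lam = 0"
      hence e: "\<And>t. (\<Sum>j<Suc k. b0 j * z j t) = (\<Sum>j<k. b0 j * z j t)" by (simp add: lam_def)
      have "\<forall>t. (\<Sum>j<k. b0 j * z j t) = 0" using b0T by (intro IH) (metis e)
      with t0 e show False by simp
    qed
    show ?thesis
    proof (rule exI[of _ "insert t0 T"], intro conjI allI impI)
      show "finite (insert t0 T)" using T by simp
      show "card (insert t0 T) \<le> Suc k" using T by (simp add: card_insert_if)
      fix b :: "nat \<Rightarrow> 'a" and t
      assume hb: "\<forall>t\<in>insert t0 T. (\<Sum>j<Suc k. b j * z j t) = 0"
      define mu where "mu = b k / lam"
      define b' where "b' j = b j - mu * b0 j" for j
      have e1: "(\<Sum>j<k. b' j * z j s) = (\<Sum>j<Suc k. b j * z j s) - mu * (\<Sum>j<Suc k. b0 j * z j s)" for s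
      proof -
        have "(\<Sum>j<Suc k. b' j * z j s) = (\<Sum>j<Suc k. b j * z j s) - mu * (\<Sum>j<Suc k. b0 j * z j s)"
          by (simp add: b'_def algebra_simps sum_subtractf sum_distrib_left)
        moreover have "b' k = 0" using lam by (simp add: b'_def mu_def lam_def)
        ultimately show ?thesis by simp
      qed
      have "\<forall>s. (\<Sum>j<k. b' j * z j s) = 0"
        by (rule IH) (use hb b0T in \<open>simp add: e1\<close>)
      hence e2: "\<And>s. (\<Sum>j<Suc k. b j * z j s) = mu * (\<Sum>j<Suc k. b0 j * z j s)"
        by (simp add: e1)
      have "mu * (\<Sum>j<Suc k. b0 j * z j t0) = 0" using hb e2[of t0] by simp
      hence "mu = 0" using t0 by simp
      thus "(\<Sum>j<Suc k. b j * z j t) = 0" using e2[of t] by simp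
    qed
  qed
qed


lemma combine_gen:
  fixes y z :: "nat \<Rightarrow> nat \<Rightarrow> 'a::field"
  assumes gy: "gen R1 k1 n y" and gz: "gen R2 k2 n z"
    and T: "\<And>b. (\<forall>t\<in>T. (\<Sum>j<k2. b j * z j t) = 0) \<Longrightarrow> (\<forall>t. (\<Sum>j<k2. b j * z j t) = 0)"
    and ty: "\<And>j t. j < k1 \<Longrightarrow> t \<in> T \<Longrightarrow> y j t = p t"
    and t0: "t0 < n" and yt0: "\<And>j. j < k1 \<Longrightarrow> y j t0 = c"
    and zt0: "\<And>j. j < k2 \<Longrightarrow> z j t0 = a" and ca: "c \<noteq> a"
  shows "gen (\<lambda>b. R1 b \<and> R2 (\<lambda>j. b (k1+j))) (k1+k2) n (\<lambda>j. if j<k1 then y j else z (j-k1))"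
    (is "gen ?R _ _ ?x")
proof -
  have xs: "(\<Sum>j<k1+k2. b j * ?x j t) = (\<Sum>j<k1. b j * y j t) + (\<Sum>j<k2. b (k1+j) * z j t)" for b t
    by (simp add: sum_split)
  have vy: "\<And>j. j < k1 \<Longrightarrow> y j \<in> vecs n" and vz: "\<And>j. j < k2 \<Longrightarrow> z j \<in> vecs n"
    using gy gz by (auto simp: gen_def)
  have P1: "\<forall>j<k1+k2. ?x j \<in> vecs n" using vy vz by auto
  have P2: "dep (k1+k2) b ?x n" if "?R b" for b
  proof -
    have "dep k1 b y n" "dep k2 (\<lambda>j. b (k1+j)) z n" using that gy gz by (auto simp: gen_def)
    thus "dep (k1+k2) b ?x n" unfolding dep_def xs by simp
  qed
  have P3: "?R b" if h: "(\<Sum>j<k1+k2. b j) = 0 \<and> dep (k1+k2) b ?x n" for b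
  proof -
    define s1 where "s1 = (\<Sum>j<k1. b j)"
    define s2 where "s2 = (\<Sum>j<k2. b (k1+j))"
    have s12: "s1 + s2 = 0" using h by (simp add: sum_split s1_def s2_def)
    have E: "\<And>t. t < n \<Longrightarrow> (\<Sum>j<k1. b j * y j t) + (\<Sum>j<k2. b (k1+j) * z j t) = 0"
      using h by (simp add: dep_def xs)
    have a1: "(\<Sum>j<k1. b j * y j t0) = s1 * c"
      by (simp add: s1_def sum_distrib_right yt0)
    have a2: "(\<Sum>j<k2. b (k1+j) * z j t0) = s2 * a"
      by (simp add: s2_def sum_distrib_right zt0)
    have "s1 * c + s2 * a = 0" using E[OF t0] a1 a2 by simp
    hence "s1 * (c - a) = 0" using s12 by (simp add: algebra_simps eq_neg_iff_add_eq_0[symmetric])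
    hence s1: "s1 = 0" using ca by simp
    hence s2: "s2 = 0" using s12 by simp
    have "\<forall>t\<in>T. (\<Sum>j<k2. b (k1+j) * z j t) = 0"
    proof
      fix t assume tT: "t \<in> T"
      show "(\<Sum>j<k2. b (k1+j) * z j t) = 0"
      proof (cases "t < n")
        case True
        have "(\<Sum>j<k1. b j * y j t) = s1 * p t"
          by (simp add: s1_def sum_distrib_right ty tT)
        thus ?thesis using E[OF True] s1 by simp
      next
        case False
        hence "\<And>j. j < k2 \<Longrightarrow> z j t = 0" using vz by (auto simp: vecs_def)
        thus ?thesis by simp
      qed
    qed
    hence zz: "\<forall>t. (\<Sum>j<k2. b (k1+j) * z j t) = 0" by (rule T)
    hence "dep k2 (\<lambda>j. b (k1+j)) z n" by (simp add: dep_def)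
    hence r2: "R2 (\<lambda>j. b (k1+j))" using gz s2 by (auto simp: gen_def s2_def)
    have "dep k1 b y n" using E zz by (simp add: dep_def)
    hence "R1 b" using gy s1 by (auto simp: gen_def s1_def)
    with r2 show "?R b" by simp
  qed
  show ?thesis unfolding gen_def using P1 P2 P3 by blast
qed


lemma vecs0_card: "S \<subseteq> vecs 0 \<Longrightarrow> card S \<le> 1"
proof -
  assume "S \<subseteq> vecs 0"
  hence "S \<subseteq> {\<lambda>_. 0}" by (auto simp: vecs_def)
  hence "card S \<le> card {\<lambda>_::nat. 0::'a}" by (intro card_mono) auto
  thus ?thesis by simp
qed

lemma temp_back:
  fixes R1 R2 :: "(nat \<Rightarrow> 'a::{finite,field}) \<Rightarrow> bool"
  assumes "Temp R1 k1" "Temp R2 k2"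
  shows "Temp (\<lambda>b. R1 b \<and> R2 (\<lambda>j. b (k1+j))) (k1+k2)"
proof -
  define q where "q = real (card (UNIV :: 'a set))"
  have q2: "q \<ge> 2" using card_ge2[where 'a='a] by (simp add: q_def)
  obtain \<beta>1 \<gamma>1 where B1: "\<beta>1 > 0 \<and> \<gamma>1 > 0 \<and> \<gamma>1 < q \<and>
    (\<forall>n S. S \<subseteq> vecs n \<and> \<beta>1 * \<gamma>1 ^ n \<le> real (card S) \<longrightarrow>
            (\<exists>x. (\<forall>j<k1. x j \<in> S) \<and> gen R1 k1 n x))"
    using assms(1) unfolding Temp_def q_def[symmetric] by blast
  have b1: "\<beta>1 > 0" "\<gamma>1 > 0" "\<gamma>1 < q" using B1 by auto
  have H10: "\<forall>n S. S \<subseteq> vecs n \<and> \<beta>1 * \<gamma>1 ^ n \<le> real (card S) \<longrightarrow>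
            (\<exists>x. (\<forall>j<k1. x j \<in> S) \<and> gen R1 k1 n x)" using B1 by blast
  have H1: "\<exists>x. (\<forall>j<k1. x j \<in> S) \<and> gen R1 k1 n x"
    if "S \<subseteq> vecs n" "real (card S) \<ge> \<beta>1 * \<gamma>1 ^ n" for n S
    using H10 that by simp
  obtain \<beta>2 \<gamma>2 where B2: "\<beta>2 > 0 \<and> \<gamma>2 > 0 \<and> \<gamma>2 < q \<and>
    (\<forall>n S. S \<subseteq> vecs n \<and> \<beta>2 * \<gamma>2 ^ n \<le> real (card S) \<longrightarrow>
            (\<exists>x. (\<forall>j<k2. x j \<in> S) \<and> gen R2 k2 n x))"
    using assms(2) unfolding Temp_def q_def[symmetric] by blast
  have b2: "\<beta>2 > 0" "\<gamma>2 > 0" "\<gamma>2 < q" using B2 by auto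
  have H20: "\<forall>n S. S \<subseteq> vecs n \<and> \<beta>2 * \<gamma>2 ^ n \<le> real (card S) \<longrightarrow>
            (\<exists>x. (\<forall>j<k2. x j \<in> S) \<and> gen R2 k2 n x)" using B2 by blast
  have H2: "\<exists>x. (\<forall>j<k2. x j \<in> S) \<and> gen R2 k2 n x"
    if "S \<subseteq> vecs n" "real (card S) \<ge> \<beta>2 * \<gamma>2 ^ n" for n S
    using H20 that by simp
  define \<gamma>0 where "\<gamma>0 = max \<gamma>1 \<gamma>2"
  define \<gamma> where "\<gamma> = (\<gamma>0 + q) / 2"
  define h where "h = \<gamma> / \<gamma>0 - 1"
  define K where "K = q ^ (k2 + 1)"
  define \<beta> where "\<beta> = max 2 (max (q * \<beta>2) (2 * K * \<beta>1 / h))"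
  have g0: "\<gamma>0 > 0" "\<gamma>0 < q" "\<gamma>1 \<le> \<gamma>0" "\<gamma>2 \<le> \<gamma>0" using b1 b2 by (auto simp: \<gamma>0_def)
  have g: "\<gamma>0 < \<gamma>" "\<gamma> < q" "\<gamma> \<ge> 1" using g0 q2 by (auto simp: \<gamma>_def)
  have hpos: "h > 0" using g g0 by (simp add: h_def)
  have Kpos: "K > 0" using q2 by (simp add: K_def)
  have bpos: "\<beta> \<ge> 2" by (simp add: \<beta>_def)
  show ?thesis unfolding Temp_def
  proof (rule exI[of _ \<beta>], rule exI[of _ \<gamma>], intro conjI)
    show "\<beta> > 0" using bpos by simp
    show "\<gamma> > 0" using g by simp
    show "\<gamma> < real (card (UNIV :: 'a set))" using g by (simp add: q_def)
    show "\<forall>n S. S \<subseteq> vecs n \<and> \<beta> * \<gamma> ^ n \<le> real (card S) \<longrightarrow>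
            (\<exists>x. (\<forall>j<k1+k2. x j \<in> S) \<and> gen (\<lambda>b. R1 b \<and> R2 (\<lambda>j. b (k1+j))) (k1+k2) n x)"
    proof (intro allI impI)
    fix n and S :: "(nat \<Rightarrow> 'a) set"
    assume hS: "S \<subseteq> vecs n \<and> \<beta> * \<gamma> ^ n \<le> real (card S)"
    have gn: "\<gamma> ^ n \<ge> 1" using g by simp
    have cS: "real (card S) \<ge> \<beta> * \<gamma> ^ n" using hS by simp
    have cS2: "real (card S) \<ge> 2"
    proof -
      have "\<beta> * \<gamma> ^ n \<ge> 2 * 1" using bpos gn by (intro mult_mono) auto
      thus ?thesis using cS by simp
    qed
    have finS: "finite S" by (rule ccontr) (use cS2 in simp)
    have Sne: "S \<noteq> {}" using cS2 by auto
    have n0: "n \<noteq> 0"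
    proof
      assume "n = 0"
      hence "card S \<le> 1" using hS vecs0_card[of S] by simp
      thus False using cS2 by simp
    qed
    have "\<forall>t. \<exists>c. real (card S) \<le> q * real (card {s\<in>S. s t = c})"
    proof
      fix t
      from pigeon[OF finS finite_UNIV, of "\<lambda>s. s t"] Sne
      show "\<exists>c. real (card S) \<le> q * real (card {s\<in>S. s t = c})" by (auto simp: q_def)
    qed
    then obtain mo where mo: "\<And>t. real (card S) \<le> q * real (card {s\<in>S. s t = mo t})"
      by metis
    define mv where "mv t = (if t < n then mo t else 0)" for t
    have cover: "S - {mv} \<subseteq> (\<Union>t\<in>{..<n}. {s\<in>S. s t \<noteq> mv t})"
    proof
      fix s assume s: "s \<in> S - {mv}"
      then obtain t where "s t \<noteq> mv t" by auto
      moreover have "t < n"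
      proof (rule ccontr)
        assume "\<not> t < n"
        hence "s t = 0" "mv t = 0" using s hS by (auto simp: vecs_def mv_def)
        with \<open>s t \<noteq> mv t\<close> show False by simp
      qed
      ultimately show "s \<in> (\<Union>t\<in>{..<n}. {s\<in>S. s t \<noteq> mv t})" using s by auto
    qed
    have "card S - 1 \<le> card (S - {mv})" by (simp add: card_Diff_singleton_if)
    also have "\<dots> \<le> card (\<Union>t\<in>{..<n}. {s\<in>S. s t \<noteq> mv t})"
      using cover by (intro card_mono) (use finS in auto)
    also have "\<dots> \<le> (\<Sum>t<n. card {s\<in>S. s t \<noteq> mv t})" by (rule card_UN_le) simp
    finally have "real (card S) - 1 \<le> (\<Sum>t<n. real (card {s\<in>S. s t \<noteq> mv t}))"
      using cS2 by (simp flip: of_nat_sum)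
    from avg_exists[OF _ _ this] n0 obtain t0 where t0: "t0 < n"
      and cY0: "real (card S) - 1 \<le> real n * real (card {s\<in>S. s t0 \<noteq> mv t0})"
      by auto
    define a where "a = mv t0"
    define Z where "Z = {s\<in>S. s t0 = a}"
    define Y0 where "Y0 = {s\<in>S. s t0 \<noteq> a}"
    have cZ: "real (card S) \<le> q * real (card Z)" using mo[of t0] t0 by (simp add: Z_def a_def mv_def)
    have cY: "real (card S) - 1 \<le> real n * real (card Y0)" using cY0 by (simp add: Y0_def a_def)
    have "\<beta>2 * \<gamma>2 ^ n \<le> real (card Z)"
    proof -
      have x1: "\<beta>2 * \<gamma>2 ^ n \<le> \<beta>2 * \<gamma> ^ n"
        using b2 g0 g by (intro mult_left_mono power_mono) auto
      have "q * \<beta>2 \<le> \<beta>" by (simp add: \<beta>_def)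
      hence "q * \<beta>2 * \<gamma> ^ n \<le> \<beta> * \<gamma> ^ n" using gn by (intro mult_right_mono) auto
      hence "q * (\<beta>2 * \<gamma> ^ n) \<le> q * real (card Z)" using cS cZ by (simp add: mult.assoc)
      hence "\<beta>2 * \<gamma> ^ n \<le> real (card Z)" using q2 by (simp add: mult_le_cancel_left_pos)
      thus ?thesis using x1 by linarith
    qed
    moreover have "Z \<subseteq> vecs n" using hS by (auto simp: Z_def)
    ultimately have "\<exists>x. (\<forall>j<k2. x j \<in> Z) \<and> gen R2 k2 n x" by (intro H2)
    then obtain z where zZ: "\<forall>j<k2. z j \<in> Z" and gz: "gen R2 k2 n z" by blast
    obtain T where T: "finite T" "card T \<le> k2"
      and Tinj0: "\<forall>b. (\<forall>t\<in>T. (\<Sum>j<k2. b j * z j t) = 0) \<longrightarrow> (\<forall>t. (\<Sum>j<k2. b j * z j t) = 0)"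
      using proj_inj[of k2 z] by (elim exE conjE) (rule that)
    have Tinj: "\<And>b. (\<forall>t\<in>T. (\<Sum>j<k2. b j * z j t) = 0) \<Longrightarrow> (\<forall>t. (\<Sum>j<k2. b j * z j t) = 0)"
      using Tinj0 by simp
    define T' where "T' = insert t0 T"
    have T': "finite T'" "card T' \<le> k2 + 1" using T by (auto simp: T'_def card_insert_if)
    define Y where "Y = PiE T' (\<lambda>_. (UNIV :: 'a set))"
    have cardY: "real (card Y) \<le> K"
    proof -
      have "card Y = card (UNIV :: 'a set) ^ card T'" using T' by (simp add: Y_def card_PiE)
      hence "real (card Y) = q ^ card T'" by (simp add: q_def)
      also have "\<dots> \<le> K" unfolding K_def using q2 T' by (intro power_increasing) auto
      finally show ?thesis .
    qed
    have finY0: "finite Y0" using finS by (simp add: Y0_def)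
    have Y0ne: "Y0 \<noteq> {}"
    proof
      assume "Y0 = {}"
      thus False using cY cS2 by simp
    qed
    obtain p where "p \<in> Y" and pC: "real (card Y0) \<le> real (card Y) * real (card {s\<in>Y0. restrict s T' = p})"
    proof -
      have "(\<lambda>s. restrict s T') ` Y0 \<subseteq> Y" by (auto simp: Y_def restrict_PiE_iff)
      moreover have "finite Y" using T' by (simp add: Y_def finite_PiE)
      ultimately show ?thesis using pigeon[OF finY0 _ _ Y0ne, of Y "\<lambda>s. restrict s T'"] that by blast
    qed
    define C where "C = {s\<in>Y0. restrict s T' = p}"
    have cC: "real (card Y0) \<le> K * real (card C)"
    proof -
      have "real (card Y) * real (card {s\<in>Y0. restrict s T' = p}) \<le> K * real (card {s\<in>Y0. restrict s T' = p})"
        using cardY by (intro mult_right_mono) auto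
      thus ?thesis using pC unfolding C_def by linarith
    qed
    have "\<beta>1 * \<gamma>1 ^ n \<le> real (card C)"
    proof -
      have "2 * K * \<beta>1 / h \<le> \<beta>" by (simp add: \<beta>_def)
      hence "2 * K * \<beta>1 / h * \<gamma> ^ n \<le> \<beta> * \<gamma> ^ n" using gn by (intro mult_right_mono) auto
      hence e1: "2 * K * \<beta>1 / h * \<gamma> ^ n \<le> real (card S)" using cS by linarith
      have "real n * real (card Y0) \<le> real n * (K * real (card C))"
        using cC by (intro mult_left_mono) auto
      hence e2: "real (card S) \<le> 2 * real n * K * real (card C)"
        using cY cS2 by (simp add: algebra_simps)
      have e3: "real n * h * \<gamma>0 ^ n \<le> \<gamma> ^ n"
      proof -
        have "real n * h \<le> 1 + real n * h" by simp
        also have "\<dots> \<le> (1 + h) ^ n" using hpos by (intro Bernoulli_inequality) simp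
        also have "1 + h = \<gamma> / \<gamma>0" by (simp add: h_def)
        finally have "real n * h \<le> (\<gamma> / \<gamma>0) ^ n" .
        hence "real n * h * \<gamma>0 ^ n \<le> (\<gamma> / \<gamma>0) ^ n * \<gamma>0 ^ n"
          using g0 by (intro mult_right_mono) auto
        also have "\<dots> = \<gamma> ^ n" using g0 by (simp add: power_divide)
        finally show ?thesis .
      qed
      have e4: "\<gamma>1 ^ n \<le> \<gamma>0 ^ n" using g0 b1 by (intro power_mono) auto
      have "real n * h * \<gamma>1 ^ n \<le> real n * h * \<gamma>0 ^ n"
        using e4 hpos by (intro mult_left_mono) auto
      hence e5: "real n * h * \<gamma>1 ^ n \<le> \<gamma> ^ n" using e3 by linarith
      have "2 * K * \<beta>1 / h * (real n * h * \<gamma>1 ^ n) \<le> 2 * K * \<beta>1 / h * \<gamma> ^ n"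
        using e5 hpos Kpos b1 by (intro mult_left_mono) auto
      moreover have "2 * K * \<beta>1 / h * (real n * h * \<gamma>1 ^ n) = 2 * K * \<beta>1 * real n * \<gamma>1 ^ n"
        using hpos by (simp add: field_simps)
      ultimately have "2 * K * \<beta>1 * real n * \<gamma>1 ^ n \<le> 2 * real n * K * real (card C)"
        using e1 e2 by linarith
      hence "(2 * K * real n) * (\<beta>1 * \<gamma>1 ^ n) \<le> (2 * K * real n) * real (card C)"
        by (simp add: algebra_simps)
      moreover have "2 * K * real n > 0" using Kpos n0 by simp
      ultimately show ?thesis using mult_le_cancel_left_pos by blast
    qed
    moreover have "C \<subseteq> vecs n" using hS by (auto simp: C_def Y0_def)
    ultimately have "\<exists>x. (\<forall>j<k1. x j \<in> C) \<and> gen R1 k1 n x" by (intro H1)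
    then obtain y where yC: "\<forall>j<k1. y j \<in> C" and gy: "gen R1 k1 n y" by blast
    have "C \<noteq> {}"
    proof
      assume "C = {}"
      moreover have "\<beta>1 * \<gamma>1 ^ n > 0" using b1 by simp
      ultimately show False using \<open>\<beta>1 * \<gamma>1 ^ n \<le> real (card C)\<close> by simp
    qed
    then obtain s0 where s0: "s0 \<in> C" by auto
    have ty: "y j t = s0 t" if "j < k1" "t \<in> T'" for j t
    proof -
      have "restrict (y j) T' = restrict s0 T'" using yC s0 that by (auto simp: C_def)
      hence "restrict (y j) T' t = restrict s0 T' t" by simp
      thus ?thesis using that by simp
    qed
    have ca: "s0 t0 \<noteq> a" using s0 by (simp add: C_def Y0_def)
    have G: "gen (\<lambda>b. R1 b \<and> R2 (\<lambda>j. b (k1+j))) (k1+k2) n (\<lambda>j. if j<k1 then y j else z (j-k1))"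
    proof (rule combine_gen[OF gy gz Tinj _ t0 _ _ ca])
      show "\<And>j t. j < k1 \<Longrightarrow> t \<in> T \<Longrightarrow> y j t = s0 t" using ty by (simp add: T'_def)
      show "\<And>j. j < k1 \<Longrightarrow> y j t0 = s0 t0" using ty by (simp add: T'_def)
      show "\<And>j. j < k2 \<Longrightarrow> z j t0 = a" using zZ by (simp add: Z_def)
    qed
    have M: "\<forall>j<k1+k2. (if j<k1 then y j else z (j-k1)) \<in> S"
    proof (intro allI impI)
      fix j assume j: "j < k1 + k2"
      have "C \<subseteq> S" "Z \<subseteq> S" by (auto simp: C_def Y0_def Z_def)
      thus "(if j<k1 then y j else z (j-k1)) \<in> S" using yC zZ j by auto
    qed
    show "\<exists>x. (\<forall>j<k1+k2. x j \<in> S) \<and> gen (\<lambda>b. R1 b \<and> R2 (\<lambda>j. b (k1+j))) (k1+k2) n x"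
      by (rule exI[of _ "\<lambda>j. if j<k1 then y j else z (j-k1)"], rule conjI[OF M G])
  qed
  qed
qed


lemma dep_split:
  "dep (k1+k2) b x n \<longleftrightarrow> (\<forall>t<n. (\<Sum>j<k1. b j * x j t) + (\<Sum>j<k2. b (k1+j) * x (k1+j) t) = 0)"
  by (simp add: dep_def sum_split)

lemma temp_fwd:
  fixes R1 R2 :: "(nat \<Rightarrow> 'a::{finite,field}) \<Rightarrow> bool"
  assumes T: "Temp (\<lambda>b. R1 b \<and> R2 (\<lambda>j. b (k1+j))) (k1+k2)"
    and z1: "R1 (\<lambda>_. 0)" and z2: "R2 (\<lambda>_. 0)"
    and c1: "\<And>b b'. (\<forall>j<k1. b j = b' j) \<Longrightarrow> R1 b = R1 b'"
  shows "Temp R1 k1 \<and> Temp R2 k2"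
proof -
  obtain \<beta> \<gamma> where B: "\<beta> > 0 \<and> \<gamma> > 0 \<and> \<gamma> < real (card (UNIV :: 'a set)) \<and>
        (\<forall>n S. S \<subseteq> vecs n \<and> \<beta> * \<gamma> ^ n \<le> real (card S) \<longrightarrow>
            (\<exists>x. (\<forall>j<k1+k2. x j \<in> S) \<and> gen (\<lambda>b. R1 b \<and> R2 (\<lambda>j. b (k1+j))) (k1+k2) n x))"
    using T unfolding Temp_def by blast
  have H: "\<exists>x. (\<forall>j<k1+k2. x j \<in> S) \<and> gen (\<lambda>b. R1 b \<and> R2 (\<lambda>j. b (k1+j))) (k1+k2) n x"
    if "S \<subseteq> vecs n" "\<beta> * \<gamma> ^ n \<le> real (card S)" for n S
  proof -
    have H0: "\<forall>n S. S \<subseteq> vecs n \<and> \<beta> * \<gamma> ^ n \<le> real (card S) \<longrightarrow>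
            (\<exists>x. (\<forall>j<k1+k2. x j \<in> S) \<and> gen (\<lambda>b. R1 b \<and> R2 (\<lambda>j. b (k1+j))) (k1+k2) n x)"
      using B by blast
    show ?thesis using H0 that by simp
  qed
  have "Temp R1 k1" unfolding Temp_def
  proof (rule exI[of _ \<beta>], rule exI[of _ \<gamma>], intro conjI allI impI)
    show "\<beta> > 0" "\<gamma> > 0" "\<gamma> < real (card (UNIV :: 'a set))" using B by auto
    fix n and S :: "(nat \<Rightarrow> 'a) set"
    assume hS: "S \<subseteq> vecs n \<and> \<beta> * \<gamma> ^ n \<le> real (card S)"
    have "\<exists>x. (\<forall>j<k1+k2. x j \<in> S) \<and> gen (\<lambda>b. R1 b \<and> R2 (\<lambda>j. b (k1+j))) (k1+k2) n x"
      using hS by (intro H) auto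
    then obtain x where xS: "\<forall>j<k1+k2. x j \<in> S"
      and g: "gen (\<lambda>b. R1 b \<and> R2 (\<lambda>j. b (k1+j))) (k1+k2) n x" by blast
    have g2: "\<And>b. R1 b \<Longrightarrow> R2 (\<lambda>j. b (k1+j)) \<Longrightarrow> dep (k1+k2) b x n"
      and g3: "\<And>b. (\<Sum>j<k1+k2. b j) = 0 \<Longrightarrow> dep (k1+k2) b x n \<Longrightarrow> R1 b \<and> R2 (\<lambda>j. b (k1+j))"
      and g1: "\<And>j. j < k1+k2 \<Longrightarrow> x j \<in> vecs n"
      using g unfolding gen_def by blast+
    have G: "gen R1 k1 n x" unfolding gen_def
    proof (intro conjI allI impI)
      fix j assume "j < k1" thus "x j \<in> vecs n" using g1 by simp
    next
      fix b assume r: "R1 b"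
      define b' where "b' j = (if j < k1 then b j else 0)" for j
      have "R1 b'" using r c1[of b' b] by (simp add: b'_def)
      moreover have "(\<lambda>j. b' (k1+j)) = (\<lambda>_. 0)" by (simp add: b'_def)
      ultimately have "dep (k1+k2) b' x n" using g2 z2 by simp
      thus "dep k1 b x n" unfolding dep_split by (simp add: dep_def b'_def)
    next
      fix b assume h: "(\<Sum>j<k1. b j) = 0 \<and> dep k1 b x n"
      define b' where "b' j = (if j < k1 then b j else 0)" for j
      have "(\<Sum>j<k1+k2. b' j) = 0" using h by (simp add: sum_split b'_def)
      moreover have "dep (k1+k2) b' x n" using h unfolding dep_split by (simp add: dep_def b'_def)
      ultimately have "R1 b'" using g3 by blast
      thus "R1 b" using c1[of b' b] by (simp add: b'_def)
    qed
    have M: "\<forall>j<k1. x j \<in> S" using xS by auto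
    show "\<exists>x. (\<forall>j<k1. x j \<in> S) \<and> gen R1 k1 n x" by (rule exI[of _ x], rule conjI[OF M G])
  qed
  moreover have "Temp R2 k2" unfolding Temp_def
  proof (rule exI[of _ \<beta>], rule exI[of _ \<gamma>], intro conjI allI impI)
    show "\<beta> > 0" "\<gamma> > 0" "\<gamma> < real (card (UNIV :: 'a set))" using B by auto
    fix n and S :: "(nat \<Rightarrow> 'a) set"
    assume hS: "S \<subseteq> vecs n \<and> \<beta> * \<gamma> ^ n \<le> real (card S)"
    have "\<exists>x. (\<forall>j<k1+k2. x j \<in> S) \<and> gen (\<lambda>b. R1 b \<and> R2 (\<lambda>j. b (k1+j))) (k1+k2) n x"
      using hS by (intro H) auto
    then obtain x where xS: "\<forall>j<k1+k2. x j \<in> S"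
      and g: "gen (\<lambda>b. R1 b \<and> R2 (\<lambda>j. b (k1+j))) (k1+k2) n x" by blast
    have g2: "\<And>b. R1 b \<Longrightarrow> R2 (\<lambda>j. b (k1+j)) \<Longrightarrow> dep (k1+k2) b x n"
      and g3: "\<And>b. (\<Sum>j<k1+k2. b j) = 0 \<Longrightarrow> dep (k1+k2) b x n \<Longrightarrow> R1 b \<and> R2 (\<lambda>j. b (k1+j))"
      and g1: "\<And>j. j < k1+k2 \<Longrightarrow> x j \<in> vecs n"
      using g unfolding gen_def by blast+
    have G: "gen R2 k2 n (\<lambda>j. x (k1+j))" unfolding gen_def
    proof (intro conjI allI impI)
      fix j assume "j < k2" thus "x (k1+j) \<in> vecs n" using g1 by simp
    next
      fix b assume r: "R2 b"
      define b' where "b' j = (if j < k1 then 0 else b (j - k1))" for j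
      have "R1 b'" using z1 c1[of b' "\<lambda>_. 0"] by (simp add: b'_def)
      moreover have "(\<lambda>j. b' (k1+j)) = b" by (simp add: b'_def)
      ultimately have "dep (k1+k2) b' x n" using g2 r by simp
      thus "dep k2 b (\<lambda>j. x (k1+j)) n" unfolding dep_split by (simp add: dep_def b'_def)
    next
      fix b assume h: "(\<Sum>j<k2. b j) = 0 \<and> dep k2 b (\<lambda>j. x (k1+j)) n"
      define b' where "b' j = (if j < k1 then 0 else b (j - k1))" for j
      have "(\<Sum>j<k1+k2. b' j) = 0" using h by (simp add: sum_split b'_def)
      moreover have "dep (k1+k2) b' x n" using h unfolding dep_split by (simp add: dep_def b'_def)
      ultimately have "R2 (\<lambda>j. b' (k1+j))" using g3 by blast
      moreover have "(\<lambda>j. b' (k1+j)) = b" by (simp add: b'_def)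
      ultimately show "R2 b" by simp
    qed
    have M: "\<forall>j<k2. x (k1+j) \<in> S" using xS by auto
    show "\<exists>x. (\<forall>j<k2. x j \<in> S) \<and> gen R2 k2 n x"
      by (rule exI[of _ "\<lambda>j. x (k1+j)"], rule conjI[OF _ G]) (use M in simp)
  qed
  ultimately show ?thesis ..
qed


lemma gen_cong:
  assumes "\<forall>j<k. x j = x' j"
  shows "gen R k n x = gen R k n x'"
proof -
  have "dep k b x n = dep k b x' n" for b
  proof -
    have "(\<Sum>j<k. b j * x j t) = (\<Sum>j<k. b j * x' j t)" for t
      by (rule sum.cong) (auto simp: assms)
    thus ?thesis unfolding dep_def by simp
  qed
  moreover have "(\<forall>j<k. x j \<in> vecs n) = (\<forall>j<k. x' j \<in> vecs n)" using assms by auto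
  ultimately show ?thesis unfolding gen_def by simp
qed

lemma gen_perm:
  assumes bij: "bij_betw \<sigma> {..<k} {..<k}"
    and RR: "\<And>b. R b \<longleftrightarrow> R' (b \<circ> \<sigma>)"
    and cR: "\<And>b b'. \<forall>j<k. b j = b' j \<Longrightarrow> R' b = R' b'"
  shows "gen R k n x \<longleftrightarrow> gen R' k n (x \<circ> \<sigma>)"
proof -
  define \<tau> where "\<tau> = inv_into {..<k} \<sigma>"
  have st: "\<And>j. j < k \<Longrightarrow> \<sigma> (\<tau> j) = j" using bij unfolding \<tau>_def
    by (meson bij_betw_inv_into_right lessThan_iff)
  have ts: "\<And>j. j < k \<Longrightarrow> \<tau> (\<sigma> j) = j" using bij unfolding \<tau>_def
    by (meson bij_betw_inv_into_left lessThan_iff)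
  have sk: "\<And>j. j < k \<Longrightarrow> \<sigma> j < k" using bij by (auto simp: bij_betw_def)
  have tk: "\<And>j. j < k \<Longrightarrow> \<tau> j < k" using bij unfolding \<tau>_def
    by (metis bij_betw_def inv_into_into lessThan_iff)
  have reidx: "(\<Sum>j<k. f j) = (\<Sum>j<k. f (\<sigma> j))" for f :: "nat \<Rightarrow> 'a"
    using sum.reindex_bij_betw[OF bij, of f] by simp
  have dep_eq: "dep k b x n \<longleftrightarrow> dep k (b \<circ> \<sigma>) (x \<circ> \<sigma>) n" for b
    unfolding dep_def by (simp add: reidx[of "\<lambda>j. b j * x j _"])
  have sum_eq: "(\<Sum>j<k. b j) = (\<Sum>j<k. (b \<circ> \<sigma>) j)" for b :: "nat \<Rightarrow> 'a"
    by (simp add: reidx[of b])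
  have depc: "dep k c y n = dep k c' y n" if "\<forall>j<k. c j = c' j" for c c' y
  proof -
    have "(\<Sum>j<k. c j * y j t) = (\<Sum>j<k. c' j * y j t)" for t
      by (rule sum.cong) (auto simp: that)
    thus ?thesis unfolding dep_def by simp
  qed
  have sumc: "(\<Sum>j<k. c j) = (\<Sum>j<k. c' j)" if "\<forall>j<k. c j = (c' j :: 'a)" for c c'
    by (rule sum.cong) (auto simp: that)
  have bk: "\<forall>j<k. ((c \<circ> \<tau>) \<circ> \<sigma>) j = c j" for c :: "nat \<Rightarrow> 'a" by (simp add: ts)
  have v: "(\<forall>j<k. x j \<in> vecs n) \<longleftrightarrow> (\<forall>j<k. (x \<circ> \<sigma>) j \<in> vecs n)"
    using sk st by (metis comp_apply tk)
  have p2: "(\<forall>b. R b \<longrightarrow> dep k b x n) \<longleftrightarrow> (\<forall>c. R' c \<longrightarrow> dep k c (x \<circ> \<sigma>) n)"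
  proof
    assume h: "\<forall>b. R b \<longrightarrow> dep k b x n"
    show "\<forall>c. R' c \<longrightarrow> dep k c (x \<circ> \<sigma>) n"
    proof (intro allI impI)
      fix c assume "R' c"
      hence "R' ((c \<circ> \<tau>) \<circ> \<sigma>)" using cR[OF bk[of c]] by (simp add: comp_def)
      hence "R (c \<circ> \<tau>)" using RR by simp
      hence "dep k ((c \<circ> \<tau>) \<circ> \<sigma>) (x \<circ> \<sigma>) n" using h dep_eq by blast
      thus "dep k c (x \<circ> \<sigma>) n" using depc[OF bk[of c]] by (simp add: comp_def)
    qed
  next
    assume h: "\<forall>c. R' c \<longrightarrow> dep k c (x \<circ> \<sigma>) n"
    show "\<forall>b. R b \<longrightarrow> dep k b x n" using h RR dep_eq by blast
  qed
  have p3: "(\<forall>b. (\<Sum>j<k. b j) = 0 \<and> dep k b x n \<longrightarrow> R b) \<longleftrightarrow>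
            (\<forall>c. (\<Sum>j<k. c j) = 0 \<and> dep k c (x \<circ> \<sigma>) n \<longrightarrow> R' c)"
  proof
    assume h: "\<forall>b. (\<Sum>j<k. b j) = 0 \<and> dep k b x n \<longrightarrow> R b"
    show "\<forall>c. (\<Sum>j<k. c j) = 0 \<and> dep k c (x \<circ> \<sigma>) n \<longrightarrow> R' c"
    proof (intro allI impI)
      fix c assume hc: "(\<Sum>j<k. c j) = 0 \<and> dep k c (x \<circ> \<sigma>) n"
      have "(\<Sum>j<k. ((c \<circ> \<tau>) \<circ> \<sigma>) j) = 0" using hc sumc[OF bk[of c]] by (simp add: comp_def)
      hence s0: "(\<Sum>j<k. (c \<circ> \<tau>) j) = 0" using sum_eq[of "c \<circ> \<tau>"] by simp
      have "dep k ((c \<circ> \<tau>) \<circ> \<sigma>) (x \<circ> \<sigma>) n" using hc depc[OF bk[of c]] by (simp add: comp_def)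
      hence "dep k (c \<circ> \<tau>) x n" using dep_eq by blast
      hence "R (c \<circ> \<tau>)" using h s0 by blast
      hence "R' ((c \<circ> \<tau>) \<circ> \<sigma>)" using RR by blast
      thus "R' c" using cR[OF bk[of c]] by (simp add: comp_def)
    qed
  next
    assume h: "\<forall>c. (\<Sum>j<k. c j) = 0 \<and> dep k c (x \<circ> \<sigma>) n \<longrightarrow> R' c"
    show "\<forall>b. (\<Sum>j<k. b j) = 0 \<and> dep k b x n \<longrightarrow> R b"
    proof (intro allI impI)
      fix b assume hb: "(\<Sum>j<k. b j) = 0 \<and> dep k b x n"
      hence "(\<Sum>j<k. (b \<circ> \<sigma>) j) = 0" "dep k (b \<circ> \<sigma>) (x \<circ> \<sigma>) n"
        using sum_eq[of b] dep_eq by auto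
      hence "R' (b \<circ> \<sigma>)" using h by blast
      thus "R b" using RR by blast
    qed
  qed
  show ?thesis unfolding gen_def using v p2 p3 by blast
qed

lemma temp_perm:
  fixes R R' :: "(nat \<Rightarrow> 'a::{finite,field}) \<Rightarrow> bool"
  assumes bij: "bij_betw \<sigma> {..<k} {..<k}"
    and RR: "\<And>b. R b \<longleftrightarrow> R' (b \<circ> \<sigma>)"
    and cR: "\<And>b b'. \<forall>j<k. b j = b' j \<Longrightarrow> R' b = R' b'"
  shows "Temp R k \<longleftrightarrow> Temp R' k"
proof -
  define \<tau> where "\<tau> = inv_into {..<k} \<sigma>"
  have ts: "\<And>j. j < k \<Longrightarrow> \<tau> (\<sigma> j) = j" using bij unfolding \<tau>_def
    by (meson bij_betw_inv_into_left lessThan_iff)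
  have sk: "\<And>j. j < k \<Longrightarrow> \<sigma> j < k" using bij by (auto simp: bij_betw_def)
  have tk: "\<And>j. j < k \<Longrightarrow> \<tau> j < k" using bij unfolding \<tau>_def
    by (metis bij_betw_def inv_into_into lessThan_iff)
  have G: "gen R k n x \<longleftrightarrow> gen R' k n (x \<circ> \<sigma>)" for n x using gen_perm[where R=R and R'=R', OF bij RR cR] .
  have A: "(\<exists>x. (\<forall>j<k. x j \<in> S) \<and> gen R k n x) \<longleftrightarrow> (\<exists>x. (\<forall>j<k. x j \<in> S) \<and> gen R' k n x)"
    for n and S :: "(nat \<Rightarrow> 'a) set"
  proof
    assume "\<exists>x. (\<forall>j<k. x j \<in> S) \<and> gen R k n x"
    then obtain x where x: "\<forall>j<k. x j \<in> S" "gen R k n x" by blast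
    have "\<forall>j<k. (x \<circ> \<sigma>) j \<in> S" using x sk by simp
    moreover have "gen R' k n (x \<circ> \<sigma>)" using G x by blast
    ultimately show "\<exists>x. (\<forall>j<k. x j \<in> S) \<and> gen R' k n x" by (intro exI[of _ "x \<circ> \<sigma>"] conjI)
  next
    assume "\<exists>x. (\<forall>j<k. x j \<in> S) \<and> gen R' k n x"
    then obtain x where x: "\<forall>j<k. x j \<in> S" "gen R' k n x" by blast
    have "\<forall>j<k. (x \<circ> \<tau>) j \<in> S" using x tk by simp
    moreover have "gen R' k n ((x \<circ> \<tau>) \<circ> \<sigma>)"
      using x(2) gen_cong[of k "(x \<circ> \<tau>) \<circ> \<sigma>" x] ts by simp
    hence "gen R k n (x \<circ> \<tau>)" using G by blast
    ultimately show "\<exists>x. (\<forall>j<k. x j \<in> S) \<and> gen R k n x" by (intro exI[of _ "x \<circ> \<tau>"] conjI)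
  qed
  show ?thesis unfolding Temp_def using A by simp
qed


lemma block_rowsp:
  fixes A1 A2 :: "nat \<Rightarrow> nat \<Rightarrow> 'a::field"
  shows "in_row_space (m1+m2) (k1+k2) (block_diag m1 k1 A1 A2) c \<longleftrightarrow>
    in_row_space m1 k1 A1 c \<and> in_row_space m2 k2 A2 (\<lambda>j. c (k1+j))"
proof
  assume "in_row_space (m1+m2) (k1+k2) (block_diag m1 k1 A1 A2) c"
  then obtain d where d: "\<forall>j<k1+k2. c j = (\<Sum>i<m1+m2. d i * block_diag m1 k1 A1 A2 i j)"
    by (auto simp: in_row_space_def)
  have "in_row_space m1 k1 A1 c" unfolding in_row_space_def
  proof (rule exI[of _ d], intro allI impI)
    fix j assume j: "j < k1"
    hence "c j = (\<Sum>i<m1+m2. d i * block_diag m1 k1 A1 A2 i j)" using d by simp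
    also have "\<dots> = (\<Sum>i<m1. d i * A1 i j)" using j
      by (simp add: sum_split block_diag_def)
    finally show "c j = (\<Sum>i<m1. d i * A1 i j)" .
  qed
  moreover have "in_row_space m2 k2 A2 (\<lambda>j. c (k1+j))" unfolding in_row_space_def
  proof (rule exI[of _ "\<lambda>i. d (m1+i)"], intro allI impI)
    fix j assume j: "j < k2"
    hence "c (k1+j) = (\<Sum>i<m1+m2. d i * block_diag m1 k1 A1 A2 i (k1+j))" using d by simp
    also have "\<dots> = (\<Sum>i<m2. d (m1+i) * A2 i j)"
      by (simp add: sum_split block_diag_def)
    finally show "c (k1+j) = (\<Sum>i<m2. d (m1+i) * A2 i j)" .
  qed
  ultimately show "in_row_space m1 k1 A1 c \<and> in_row_space m2 k2 A2 (\<lambda>j. c (k1+j))" ..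
next
  assume "in_row_space m1 k1 A1 c \<and> in_row_space m2 k2 A2 (\<lambda>j. c (k1+j))"
  then obtain d1 d2 where d1: "\<forall>j<k1. c j = (\<Sum>i<m1. d1 i * A1 i j)"
    and d2: "\<forall>j<k2. c (k1+j) = (\<Sum>i<m2. d2 i * A2 i j)"
    by (auto simp: in_row_space_def)
  show "in_row_space (m1+m2) (k1+k2) (block_diag m1 k1 A1 A2) c" unfolding in_row_space_def
  proof (rule exI[of _ "\<lambda>i. if i < m1 then d1 i else d2 (i - m1)"], intro allI impI)
    fix j assume j: "j < k1 + k2"
    show "c j = (\<Sum>i<m1+m2. (if i < m1 then d1 i else d2 (i - m1)) * block_diag m1 k1 A1 A2 i j)"
    proof (cases "j < k1")
      case True
      thus ?thesis using d1 by (simp add: sum_split block_diag_def)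
    next
      case False
      then obtain j' where j': "j = k1 + j'" "j' < k2" using j by (metis add_diff_inverse_nat add_less_cancel_left)
      thus ?thesis using d2 by (simp add: sum_split block_diag_def)
    qed
  qed
qed

lemma main:
  fixes A B A1 A2 :: "nat \<Rightarrow> nat \<Rightarrow> 'a::{finite,field}"
    and m k m1 k1 m2 k2 :: nat and \<sigma> :: "nat \<Rightarrow> nat"
  assumes "k = k1 + k2"
    and bij: "bij_betw \<sigma> {..<k} {..<k}"
    and Bblk: "\<forall>i<m1+m2. \<forall>j<k. B i (\<sigma> j) = block_diag m1 k1 A1 A2 i j"
    and eqv: "equivalent_systems m A (m1 + m2) B k"
  shows "temperate m k A \<longleftrightarrow> temperate m1 k1 A1 \<and> temperate m2 k2 A2"
proof -
  define Rb where "Rb c \<longleftrightarrow> in_row_space m1 k1 A1 c \<and> in_row_space m2 k2 A2 (\<lambda>j. c (k1+j))"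
    for c :: "nat \<Rightarrow> 'a"
  have R_B: "in_row_space m k A b \<longleftrightarrow> in_row_space (m1+m2) k B b" for b
    using eqv rowsp_trans unfolding equivalent_systems_def by blast
  have B_blk: "in_row_space (m1+m2) k B b \<longleftrightarrow> Rb (b \<circ> \<sigma>)" for b
  proof -
    have sk: "\<And>j. j < k \<Longrightarrow> \<sigma> j < k" using bij by (auto simp: bij_betw_def)
    have "in_row_space (m1+m2) k B b \<longleftrightarrow> in_row_space (m1+m2) k (block_diag m1 k1 A1 A2) (b \<circ> \<sigma>)"
    proof
      assume "in_row_space (m1+m2) k B b"
      then obtain d where d: "\<forall>j<k. b j = (\<Sum>i<m1+m2. d i * B i j)" by (auto simp: in_row_space_def)
      show "in_row_space (m1+m2) k (block_diag m1 k1 A1 A2) (b \<circ> \<sigma>)" unfolding in_row_space_def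
      proof (rule exI[of _ d], intro allI impI)
        fix j assume j: "j < k"
        have "(b \<circ> \<sigma>) j = (\<Sum>i<m1+m2. d i * B i (\<sigma> j))" using d sk[OF j] by simp
        also have "\<dots> = (\<Sum>i<m1+m2. d i * block_diag m1 k1 A1 A2 i j)"
          by (rule sum.cong) (use Bblk j in auto)
        finally show "(b \<circ> \<sigma>) j = (\<Sum>i<m1+m2. d i * block_diag m1 k1 A1 A2 i j)" .
      qed
    next
      assume "in_row_space (m1+m2) k (block_diag m1 k1 A1 A2) (b \<circ> \<sigma>)"
      then obtain d where d: "\<forall>j<k. b (\<sigma> j) = (\<Sum>i<m1+m2. d i * block_diag m1 k1 A1 A2 i j)"
        by (auto simp: in_row_space_def)
      show "in_row_space (m1+m2) k B b" unfolding in_row_space_def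
      proof (rule exI[of _ d], intro allI impI)
        fix j' assume j': "j' < k"
        then obtain j where j: "j < k" "j' = \<sigma> j" using bij
          by (metis bij_betw_iff_bijections lessThan_iff)
        have "b j' = (\<Sum>i<m1+m2. d i * block_diag m1 k1 A1 A2 i j)" using d j by simp
        also have "\<dots> = (\<Sum>i<m1+m2. d i * B i j')"
          by (rule sum.cong) (use Bblk j in auto)
        finally show "b j' = (\<Sum>i<m1+m2. d i * B i j')" .
      qed
    qed
    also have "\<dots> \<longleftrightarrow> Rb (b \<circ> \<sigma>)" unfolding Rb_def using block_rowsp assms(1) by metis
    finally show ?thesis .
  qed
  have cRb: "Rb c = Rb c'" if "\<forall>j<k. c j = c' j" for c c'
    using that assms(1) unfolding Rb_def in_row_space_def by auto
  have "temperate m k A \<longleftrightarrow> Temp (in_row_space m k A) k" by (rule temperate_Temp)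
  also have "\<dots> \<longleftrightarrow> Temp Rb k"
    by (rule temp_perm[OF bij]) (auto simp: R_B B_blk cRb)
  also have "\<dots> \<longleftrightarrow> Temp (in_row_space m1 k1 A1) k1 \<and> Temp (in_row_space m2 k2 A2) k2"
  proof
    assume "Temp Rb k"
    hence "Temp (\<lambda>b. in_row_space m1 k1 A1 b \<and> in_row_space m2 k2 A2 (\<lambda>j. b (k1+j))) (k1+k2)"
      using assms(1) unfolding Rb_def by simp
    thus "Temp (in_row_space m1 k1 A1) k1 \<and> Temp (in_row_space m2 k2 A2) k2"
    proof (rule temp_fwd)
      show "in_row_space m1 k1 A1 (\<lambda>_. 0)" unfolding in_row_space_def
        by (rule exI[of _ "\<lambda>_. 0"]) simp
      show "in_row_space m2 k2 A2 (\<lambda>_. 0)" unfolding in_row_space_def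
        by (rule exI[of _ "\<lambda>_. 0"]) simp
    qed (auto simp: in_row_space_def)
  next
    assume "Temp (in_row_space m1 k1 A1) k1 \<and> Temp (in_row_space m2 k2 A2) k2"
    hence "Temp (\<lambda>b. in_row_space m1 k1 A1 b \<and> in_row_space m2 k2 A2 (\<lambda>j. b (k1+j))) (k1+k2)"
      by (intro temp_back) auto
    thus "Temp Rb k" using assms(1) unfolding Rb_def by simp
  qed
  also have "\<dots> \<longleftrightarrow> temperate m1 k1 A1 \<and> temperate m2 k2 A2" by (simp add: temperate_Temp)
  finally show ?thesis .
qed

theorem proposition5p4:
  fixes A B A1 A2 :: "nat \<Rightarrow> nat \<Rightarrow> 'a::{finite,field}"
    and m k m1 k1 m2 k2 :: nat and \<sigma> :: "nat \<Rightarrow> nat"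
  assumes "m1 \<noteq> 0" "m2 \<noteq> 0" "k1 \<noteq> 0" "k2 \<noteq> 0"
    and "k = k1 + k2"
    and "bij_betw \<sigma> {..<k} {..<k}"
    and "\<forall>i<m1+m2. \<forall>j<k. B i (\<sigma> j) = block_diag m1 k1 A1 A2 i j"
    and "equivalent_systems m A (m1 + m2) B k"
  shows "temperate m k A \<longleftrightarrow> temperate m1 k1 A1 \<and> temperate m2 k2 A2"
  using main[OF assms(5-8)] .

end
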